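(* Let $q$ be a prime power, $m\geq1$, $n\geq2$, and let $r=(r_1,\ldots,r_n)\in\mathbb{F}_{q^m}^n$ with $\mathbb{F}_q(r_1,\ldots,r_n)=\mathbb{F}_{q^m}$. Let $m_i=[\mathbb{F}_q(r_i):\mathbb{F}_q]$ and suppose $m_1\geq m_2\geq\cdots\geq m_n$ with at least one strict inequality. Then there exists $f\in\mathbb{F}_q[X_1,\ldots,X_{n-1}]$ such that $[\mathbb{F}_q(r_n+f(r_1,\ldots,r_{n-1})):\mathbb{F}_q]>m_n$. *)

theory Defs
  imports Main "HOL-Library.Poly_Mapping"
begin

definition is_subfield :: "'a::field set \<Rightarrow> bool" where
  "is_subfield S \<longleftrightarrow> 0 \<in> S \<and> 1 \<in> S \<and>
     (\<forall>x\<in>S. \<forall>y\<in>S. x + y \<in> S \<and> x * y \<in> S) \<and>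
     (\<forall>x\<in>S. - x \<in> S \<and> inverse x \<in> S)"

definition gen_field :: "'a::field set \<Rightarrow> 'a set \<Rightarrow> 'a set" where
  "gen_field S A = \<Inter> {T. is_subfield T \<and> S \<union> A \<subseteq> T}"

definition span_over :: "'a::field set \<Rightarrow> 'a set \<Rightarrow> 'a set" where
  "span_over S B = {\<Sum>b\<in>B. c b * b | c. \<forall>b\<in>B. c b \<in> S}"

definition ext_degree :: "'a::field set \<Rightarrow> 'a set \<Rightarrow> nat" where
  "ext_degree S E = (LEAST d. \<exists>B. finite B \<and> card B = d \<and> B \<subseteq> E \<and> E \<subseteq> span_over S B)"

text \<open>Multivariate polynomials: finitely supported maps from monomials (finitely
  supported exponent vectors, variables indexed by nat) to coefficients.
  Evaluation at the point r.\<close>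
definition mpoly_eval :: "((nat \<Rightarrow>\<^sub>0 nat) \<Rightarrow>\<^sub>0 'a::field) \<Rightarrow> (nat \<Rightarrow> 'a) \<Rightarrow> 'a" where
  "mpoly_eval f r = (\<Sum>mn\<in>Poly_Mapping.keys f. Poly_Mapping.lookup f mn * (\<Prod>i\<in>Poly_Mapping.keys (mn :: nat \<Rightarrow>\<^sub>0 nat). r i ^ Poly_Mapping.lookup mn i))"

end

theory Submission
  imports Defs "HOL-Library.FuncSet" "HOL-Computational_Algebra.Polynomial"
begin


lemma sf_simps:
  assumes "is_subfield T"
  shows "0 \<in> T" "1 \<in> T" "x \<in> T \<Longrightarrow> y \<in> T \<Longrightarrow> x + y \<in> T"
    "x \<in> T \<Longrightarrow> y \<in> T \<Longrightarrow> x * y \<in> T" "x \<in> T \<Longrightarrow> -x \<in> T"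
    "x \<in> T \<Longrightarrow> inverse x \<in> T"
    "x \<in> T \<Longrightarrow> y \<in> T \<Longrightarrow> x - y \<in> T"
    "x \<in> T \<Longrightarrow> y \<in> T \<Longrightarrow> x / y \<in> T"
proof -
  note a = assms[unfolded is_subfield_def]
  show "0 \<in> T" "1 \<in> T" using a by auto
  show "x \<in> T \<Longrightarrow> y \<in> T \<Longrightarrow> x + y \<in> T" using a by blast
  show "x \<in> T \<Longrightarrow> y \<in> T \<Longrightarrow> x * y \<in> T" using a by blast
  show "x \<in> T \<Longrightarrow> -x \<in> T" using a by blast
  show "x \<in> T \<Longrightarrow> inverse x \<in> T" using a by blast
  show "x \<in> T \<Longrightarrow> y \<in> T \<Longrightarrow> x - y \<in> T" using a unfolding diff_conv_add_uminus by blast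
  show "x \<in> T \<Longrightarrow> y \<in> T \<Longrightarrow> x / y \<in> T" using a unfolding divide_inverse by blast
qed

lemma sf_sum:
  assumes "is_subfield T" "\<And>a. a \<in> A \<Longrightarrow> f a \<in> T"
  shows "sum f A \<in> T"
  using assms(2)
  by (induction A rule: infinite_finite_induct) (auto simp: sf_simps[OF assms(1)])

lemma sf_prod:
  assumes "is_subfield T" "\<And>a. a \<in> A \<Longrightarrow> f a \<in> T"
  shows "prod f A \<in> T"
  using assms(2)
  by (induction A rule: infinite_finite_induct) (auto simp: sf_simps[OF assms(1)])

lemma sf_power:
  assumes "is_subfield T" "x \<in> T" shows "x ^ k \<in> T"
  by (induction k) (auto simp: sf_simps[OF assms(1)] assms(2))

lemma subfield_Inter:
  assumes "\<And>T. T \<in> F \<Longrightarrow> is_subfield T"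
  shows "is_subfield (\<Inter> F)"
  using assms unfolding is_subfield_def by (auto simp: Ball_def)

lemma subfield_UNIV: "is_subfield UNIV"
  unfolding is_subfield_def by auto

lemma gen_field_sub: "is_subfield (gen_field S A)"
  unfolding gen_field_def by (rule subfield_Inter) auto

lemma gen_field_sup: "S \<union> A \<subseteq> gen_field S A"
  unfolding gen_field_def by auto

lemma gen_field_least: "is_subfield T \<Longrightarrow> S \<union> A \<subseteq> T \<Longrightarrow> gen_field S A \<subseteq> T"
  unfolding gen_field_def by auto

lemma fermat_sub:
  fixes L :: "'a::{field,finite} set"
  assumes L: "is_subfield L" and x: "x \<in> L"
  shows "x ^ card L = x"
proof (cases "x = 0")
  case True
  have "card L > 0" using sf_simps(1)[OF L] by (auto simp: card_gt_0_iff)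
  then show ?thesis using True by simp
next
  case False
  let ?M = "L - {0}"
  have bij: "bij_betw (\<lambda>y. x * y) ?M ?M"
  proof (rule bij_betwI')
    show "\<And>a b. a \<in> ?M \<Longrightarrow> b \<in> ?M \<Longrightarrow> (x * a = x * b) = (a = b)" using False by auto
    show "\<And>a. a \<in> ?M \<Longrightarrow> x * a \<in> ?M" using False x sf_simps[OF L] by auto
    fix y assume y: "y \<in> ?M"
    show "\<exists>a\<in>?M. y = x * a"
      by (rule bexI[of _ "inverse x * y"]) (use False x y sf_simps[OF L] in auto)
  qed
  have "prod (\<lambda>y. y) ?M = prod (\<lambda>y. x * y) ?M"
    using prod.reindex_bij_betw[OF bij, of "\<lambda>y. y"] by simp
  also have "\<dots> = x ^ card ?M * prod (\<lambda>y. y) ?M"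
    by (simp add: prod.distrib)
  finally have "x ^ card ?M = 1"
    by (simp add: prod_zero_iff)
  moreover have "card ?M = card L - 1" using sf_simps(1)[OF L] by simp
  moreover have "card L > 0" using sf_simps(1)[OF L] by (auto simp: card_gt_0_iff)
  ultimately have 1: "x ^ (card L - 1) = 1" by simp
  have 2: "x ^ card L = x * x ^ (card L - 1)"
    using \<open>card L > 0\<close> by (cases "card L") auto
  show ?thesis unfolding 2 1 by simp
qed




locale sfld =
  fixes S :: "'a::{field,finite} set"
  assumes sf: "is_subfield S"
begin

lemmas S = sf_simps[OF sf]

lemma span_zero: "0 \<in> span_over S B"
  unfolding span_over_def by (rule CollectI, rule exI[of _ "\<lambda>_. 0"]) (auto simp: S)

lemma span_add: assumes "x \<in> span_over S B" "y \<in> span_over S B" shows "x + y \<in> span_over S B"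
proof -
  obtain c d where "x = (\<Sum>b\<in>B. c b * b)" "\<forall>b\<in>B. c b \<in> S" "y = (\<Sum>b\<in>B. d b * b)" "\<forall>b\<in>B. d b \<in> S"
    using assms unfolding span_over_def by blast
  then show ?thesis unfolding span_over_def
    by (intro CollectI exI[of _ "\<lambda>b. c b + d b"]) (auto simp: S sum.distrib algebra_simps)
qed

lemma span_smul: assumes "a \<in> S" "x \<in> span_over S B" shows "a * x \<in> span_over S B"
proof -
  obtain c where "x = (\<Sum>b\<in>B. c b * b)" "\<forall>b\<in>B. c b \<in> S"
    using assms unfolding span_over_def by blast
  then show ?thesis unfolding span_over_def using assms(1)
    by (intro CollectI exI[of _ "\<lambda>b. a * c b"]) (auto simp: S sum_distrib_left algebra_simps)
qed

lemma span_base: assumes "finite B" "x \<in> B" shows "x \<in> span_over S B"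
  unfolding span_over_def
proof (intro CollectI exI[of _ "\<lambda>b. if b = x then 1 else 0"] conjI)
  have "(\<Sum>b\<in>B. (if b = x then 1 else 0) * b) = (\<Sum>b\<in>B. if b = x then x else 0)"
    by (rule sum.cong) auto
  then show "x = (\<Sum>b\<in>B. (if b = x then 1 else 0) * b)"
    using assms by simp
qed (auto simp: S)

lemma span_sum: assumes "\<And>i. i \<in> I \<Longrightarrow> a i \<in> S" "\<And>i. i \<in> I \<Longrightarrow> v i \<in> span_over S B"
  shows "(\<Sum>i\<in>I. a i * v i) \<in> span_over S B"
  using assms by (induction I rule: infinite_finite_induct) (auto simp: span_zero span_add span_smul)

lemma span_trans: assumes "B0 \<subseteq> span_over S B'" shows "span_over S B0 \<subseteq> span_over S B'"
proof
  fix x assume "x \<in> span_over S B0"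
  then obtain c where "x = (\<Sum>b\<in>B0. c b * b)" "\<forall>b\<in>B0. c b \<in> S"
    unfolding span_over_def by blast
  then show "x \<in> span_over S B'" using assms span_sum[of B0 c "\<lambda>b. b" B'] by auto
qed

definition closed_sp :: "'a set \<Rightarrow> bool" where
  "closed_sp E \<longleftrightarrow> 0 \<in> E \<and> (\<forall>x\<in>E. \<forall>y\<in>E. x + y \<in> E) \<and> (\<forall>a\<in>S. \<forall>x\<in>E. a * x \<in> E)"

lemma span_in_closed: assumes "closed_sp E" "B \<subseteq> E" shows "span_over S B \<subseteq> E"
proof
  fix x assume "x \<in> span_over S B"
  then obtain c where x: "x = (\<Sum>b\<in>B. c b * b)" "\<forall>b\<in>B. c b \<in> S"
    unfolding span_over_def by blast
  have "(\<Sum>b\<in>B. c b * b) \<in> E" using x(2) assms(2)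
    by (induction B rule: infinite_finite_induct) (use assms(1) in \<open>auto simp: closed_sp_def\<close>)
  then show "x \<in> E" using x by simp
qed

definition indep :: "'a set \<Rightarrow> bool" where
  "indep B \<longleftrightarrow> (\<forall>c. (\<forall>b\<in>B. c b \<in> S) \<and> (\<Sum>b\<in>B. c b * b) = 0 \<longrightarrow> (\<forall>b\<in>B. c b = 0))"

lemma card_span_indep:
  assumes fin: "finite B" and ind: "indep B"
  shows "card (span_over S B) = card S ^ card B"
proof -
  let ?g = "\<lambda>c. \<Sum>b\<in>B. c b * b"
  have inj: "inj_on ?g (Pi\<^sub>E B (\<lambda>_. S))"
  proof (rule inj_onI)
    fix c d assume c: "c \<in> Pi\<^sub>E B (\<lambda>_. S)" and d: "d \<in> Pi\<^sub>E B (\<lambda>_. S)" and eq: "?g c = ?g d"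
    have i2: "\<And>e. (\<forall>b\<in>B. e b \<in> S) \<Longrightarrow> (\<Sum>b\<in>B. e b * b) = 0 \<Longrightarrow> \<forall>b\<in>B. e b = 0"
      using ind unfolding indep_def by blast
    have z: "(\<Sum>b\<in>B. (c b - d b) * b) = 0" using eq by (simp add: algebra_simps sum_subtractf)
    have inS: "\<forall>b\<in>B. c b - d b \<in> S"
    proof
      fix b assume "b \<in> B"
      then have "c b \<in> S" "d b \<in> S" using c d PiE_mem by blast+
      then show "c b - d b \<in> S" using S(7) by blast
    qed
    have "\<forall>b\<in>B. c b - d b = 0" using i2[of "\<lambda>b. c b - d b", OF inS z] .
    then have "\<forall>b\<in>B. c b = d b" by simp
    moreover have "c \<in> extensional B" "d \<in> extensional B" using c d PiE_iff by blast+
    ultimately show "c = d" by (intro extensionalityI[of _ B]) auto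
  qed
  have img: "?g ` (Pi\<^sub>E B (\<lambda>_. S)) = span_over S B"
  proof
    show "?g ` (Pi\<^sub>E B (\<lambda>_. S)) \<subseteq> span_over S B" unfolding span_over_def by auto
    show "span_over S B \<subseteq> ?g ` (Pi\<^sub>E B (\<lambda>_. S))"
    proof
      fix x assume "x \<in> span_over S B"
      then obtain c where x: "x = (\<Sum>b\<in>B. c b * b)" "\<forall>b\<in>B. c b \<in> S"
        unfolding span_over_def by blast
      show "x \<in> ?g ` (Pi\<^sub>E B (\<lambda>_. S))"
        by (rule image_eqI[of _ _ "restrict c B"]) (use x in auto)
    qed
  qed
  have "card (span_over S B) = card (Pi\<^sub>E B (\<lambda>_. S))"
    using card_image[OF inj] img by simp
  also have "\<dots> = card S ^ card B" using fin by (simp add: card_PiE)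
  finally show ?thesis .
qed

lemma card_closed:
  assumes cl: "closed_sp E"
  shows "card E = card S ^ ext_degree S E"
proof -
  let ?P = "\<lambda>d. \<exists>B. finite B \<and> card B = d \<and> B \<subseteq> E \<and> E \<subseteq> span_over S B"
  have "?P (card E)"
    by (rule exI[of _ E]) (auto intro: span_base)
  then have "?P (ext_degree S E)" unfolding ext_degree_def by (rule LeastI)
  then obtain B where B: "finite B" "card B = ext_degree S E" "B \<subseteq> E" "E \<subseteq> span_over S B" by blast
  have least: "\<And>B'. finite B' \<Longrightarrow> B' \<subseteq> E \<Longrightarrow> E \<subseteq> span_over S B' \<Longrightarrow> ext_degree S E \<le> card B'"
    unfolding ext_degree_def by (rule Least_le) blast
  have eq: "E = span_over S B" using B span_in_closed[OF cl B(3)] by auto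
  have "indep B" unfolding indep_def
  proof (intro allI impI ballI, rule ccontr)
    fix c b0 assume c: "(\<forall>b\<in>B. c b \<in> S) \<and> (\<Sum>b\<in>B. c b * b) = 0" and b0: "b0 \<in> B" "c b0 \<noteq> 0"
    let ?B' = "B - {b0}"
    let ?T = "\<Sum>b\<in>?B'. c b * b"
    have h: "c b0 * b0 + ?T = 0"
      using c B(1) b0(1) by (simp add: sum.remove)
    then have "c b0 * b0 = - ?T" by (simp add: eq_neg_iff_add_eq_0)
    then have "b0 = - ?T / c b0" using b0(2) by (metis nonzero_mult_div_cancel_left)
    also have "\<dots> = (\<Sum>b\<in>?B'. - (c b * b) / c b0)"
      by (simp add: sum_divide_distrib sum_negf)
    also have "\<dots> = (\<Sum>b\<in>?B'. (- c b / c b0) * b)"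
      by (rule sum.cong) auto
    also have "\<dots> \<in> span_over S ?B'"
      using c b0(1) by (intro span_sum) (auto intro!: S(5) S(8) simp: B(1) span_base)
    finally have b0s: "b0 \<in> span_over S ?B'" .
    have "B \<subseteq> span_over S ?B'"
    proof
      fix x assume x: "x \<in> B"
      show "x \<in> span_over S ?B'"
      proof (cases "x = b0")
        case True then show ?thesis using b0s by simp
      next
        case False then show ?thesis using x B(1) by (intro span_base) auto
      qed
    qed
    then have "E \<subseteq> span_over S ?B'" using B(4) span_trans by blast
    then have "ext_degree S E \<le> card ?B'" using least[of ?B'] B by auto
    moreover have "card ?B' < card B" by (rule card_Diff1_less[OF B(1) b0(1)])
    ultimately show False using B(2) by simp
  qed
  then show ?thesis using card_span_indep[OF B(1)] eq B(2) by simp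
qed

end



context sfld begin

lemma closed_subfield: "is_subfield L \<Longrightarrow> S \<subseteq> L \<Longrightarrow> closed_sp L"
  unfolding closed_sp_def using sf_simps(1,3,4) by blast

lemma card_subfield: "is_subfield L \<Longrightarrow> S \<subseteq> L \<Longrightarrow> card L = card S ^ ext_degree S L"
  by (rule card_closed[OF closed_subfield])

lemma card_ge2: fixes L :: "'a set" shows "is_subfield L \<Longrightarrow> card L \<ge> 2"
proof -
  assume L: "is_subfield L"
  have "{0, 1} \<subseteq> L" using sf_simps(1,2)[OF L] by blast
  then have "card {0::'a, 1} \<le> card L" using card_mono[of L "{0,1}"] by simp
  then show ?thesis by simp
qed

lemma q2: "card S \<ge> 2" by (rule card_ge2[OF sf])

lemma deg_pos: "is_subfield L \<Longrightarrow> S \<subseteq> L \<Longrightarrow> ext_degree S L \<ge> 1"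
proof (rule ccontr)
  assume L: "is_subfield L" "S \<subseteq> L" "\<not> ext_degree S L \<ge> 1"
  then have "card L = 1" using card_subfield[OF L(1,2)] by simp
  then show False using card_ge2[OF L(1)] by simp
qed

lemma root_deg:
  fixes x :: 'a
  defines "d \<equiv> ext_degree S (gen_field S {x})"
  shows "x ^ (card S ^ d) = x" "d \<ge> 1"
proof -
  let ?L = "gen_field S {x}"
  have L: "is_subfield ?L" "S \<subseteq> ?L" "x \<in> ?L" using gen_field_sub gen_field_sup by blast+
  have "x ^ card ?L = x" by (rule fermat_sub[OF L(1,3)])
  then show "x ^ (card S ^ d) = x" using card_subfield[OF L(1,2)] d_def by simp
  show "d \<ge> 1" unfolding d_def by (rule deg_pos[OF L(1,2)])
qed

lemma card_roots_pow:
  assumes "Q \<ge> 2"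
  shows "card {x::'a. x ^ Q = x} \<le> Q"
proof -
  let ?p = "monom (1::'a) Q - [:0, 1:]"
  have ev: "poly ?p x = x ^ Q - x" for x by (simp add: poly_monom)
  have "coeff ?p Q = 1" using assms by (simp add: coeff_monom coeff_pCons split: nat.split)
  then have nz: "?p \<noteq> 0" by (metis coeff_0 zero_neq_one)
  have dg: "degree ?p \<le> Q"
    using assms by (intro degree_diff_le) (auto simp: degree_monom_le)
  have "{x::'a. x ^ Q = x} = {x. poly ?p x = 0}" using ev by auto
  then show ?thesis using card_poly_roots_bound[OF nz] dg by simp
qed

lemma geom_lt:
  fixes q :: nat assumes "q \<ge> 2"
  shows "(\<Sum>d\<in>{1..k}. q ^ d) < q ^ (k + 1)"
proof (induction k)
  case 0 then show ?case using assms by simp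
next
  case (Suc k)
  have "(\<Sum>d\<in>{1..Suc k}. q ^ d) = (\<Sum>d\<in>{1..k}. q ^ d) + q ^ (Suc k)"
    by (simp add: sum.atLeast_Suc_atMost_Suc_shift sum.cl_ivl_Suc)
  also have "\<dots> < q ^ (k+1) + q ^ (k+1)" using Suc.IH by simp
  also have "\<dots> = 2 * q ^ (k+1)" by simp
  also have "\<dots> \<le> q * q ^ (k+1)" using assms by (intro mult_right_mono) auto
  finally show ?case by simp
qed

lemma card_low_deg:
  "card {x. ext_degree S (gen_field S {x}) \<le> k} < card S ^ (k + 1)"
proof -
  let ?q = "card S"
  have sub: "{x. ext_degree S (gen_field S {x}) \<le> k} \<subseteq> (\<Union>d\<in>{1..k}. {x::'a. x ^ (?q ^ d) = x})"
  proof
    fix x assume "x \<in> {x. ext_degree S (gen_field S {x}) \<le> k}"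
    then show "x \<in> (\<Union>d\<in>{1..k}. {x::'a. x ^ (?q ^ d) = x})"
      using root_deg[of x] by auto
  qed
  have "card {x. ext_degree S (gen_field S {x}) \<le> k} \<le> card (\<Union>d\<in>{1..k}. {x::'a. x ^ (?q ^ d) = x})"
    using sub by (intro card_mono) auto
  also have "\<dots> \<le> (\<Sum>d\<in>{1..k}. card {x::'a. x ^ (?q ^ d) = x})"
    by (rule card_UN_le) simp
  also have "\<dots> \<le> (\<Sum>d\<in>{1..k}. ?q ^ d)"
  proof (rule sum_mono)
    fix d assume "d \<in> {1..k}"
    then have "?q ^ 1 \<le> ?q ^ d" using q2 by (intro power_increasing) auto
    then have "?q ^ d \<ge> 2" using q2 by simp
    then show "card {x::'a. x ^ (?q ^ d) = x} \<le> ?q ^ d" by (rule card_roots_pow)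
  qed
  also have "\<dots> < ?q ^ (k+1)" by (rule geom_lt[OF q2])
  finally show ?thesis .
qed

definition Pset :: "'a \<Rightarrow> 'a set" where
  "Pset x = {poly p x | p. \<forall>i. coeff p i \<in> S}"

lemma Pset_mult: assumes "a \<in> Pset x" "b \<in> Pset x" shows "a * b \<in> Pset x"
proof -
  obtain p where p: "a = poly p x" "\<forall>i. coeff p i \<in> S" using assms(1) unfolding Pset_def by blast
  obtain q where q: "b = poly q x" "\<forall>i. coeff q i \<in> S" using assms(2) unfolding Pset_def by blast
  have "\<forall>i. coeff (p * q) i \<in> S" unfolding coeff_mult
    using p(2) q(2) by (intro allI sf_sum[OF sf] sf_simps(4)[OF sf]) auto
  then show ?thesis unfolding Pset_def using p q by (intro CollectI exI[of _ "p * q"]) simp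
qed

lemma Pset_pow: "a \<in> Pset x \<Longrightarrow> 1 \<in> Pset x \<Longrightarrow> a ^ k \<in> Pset x"
  by (induction k) (auto intro: Pset_mult)

lemma Pset_subfield: "is_subfield (Pset x)" and Pset_sup: "S \<union> {x} \<subseteq> Pset x"
proof -
  have c: "c \<in> Pset x" if cS: "c \<in> S" for c
  proof -
    have "\<forall>i. coeff [:c:] i \<in> S" using S(1) cS by (simp add: coeff_pCons split: nat.split)
    then show ?thesis unfolding Pset_def by (intro CollectI exI[of _ "[:c:]"]) simp
  qed
  have xin: "x \<in> Pset x"
  proof -
    have "\<forall>i. coeff [:0, 1:] i \<in> S" using S(1,2) by (simp add: coeff_pCons split: nat.split)
    then show ?thesis unfolding Pset_def by (intro CollectI exI[of _ "[:0, 1:]"]) simp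
  qed
  have add: "a + b \<in> Pset x" if ab: "a \<in> Pset x" "b \<in> Pset x" for a b
  proof -
    obtain p where p: "a = poly p x" "\<forall>i. coeff p i \<in> S" using ab(1) unfolding Pset_def by blast
    obtain q where q: "b = poly q x" "\<forall>i. coeff q i \<in> S" using ab(2) unfolding Pset_def by blast
    show ?thesis unfolding Pset_def using p q by (intro CollectI exI[of _ "p + q"]) (simp add: S)
  qed
  have neg: "- a \<in> Pset x" if ab: "a \<in> Pset x" for a
  proof -
    obtain p where p: "a = poly p x" "\<forall>i. coeff p i \<in> S" using ab unfolding Pset_def by blast
    show ?thesis unfolding Pset_def using p by (intro CollectI exI[of _ "- p"]) (simp add: S)
  qed
  have one: "1 \<in> Pset x" using c S(2) by blast
  have inv: "inverse a \<in> Pset x" if a: "a \<in> Pset x" for a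
  proof (cases "a = 0")
    case True then show ?thesis using c S(1) by simp
  next
    case False
    have f: "a ^ card (UNIV :: 'a set) = a" by (rule fermat_sub[OF subfield_UNIV]) simp
    have cu: "card (UNIV :: 'a set) \<ge> 2" by (rule card_ge2[OF subfield_UNIV])
    have cN: "card (UNIV :: 'a set) = Suc (Suc (card (UNIV :: 'a set) - 2))" using cu by simp
    have "a ^ card (UNIV :: 'a set) = a * (a * a ^ (card (UNIV :: 'a set) - 2))"
      by (subst cN) simp
    then have "a * (a * a ^ (card (UNIV :: 'a set) - 2)) = a * 1" using f by simp
    then have "a * a ^ (card (UNIV :: 'a set) - 2) = 1" using False by simp
    then have "inverse a = a ^ (card (UNIV :: 'a set) - 2)"
      by (rule inverse_unique)
    then show ?thesis using Pset_pow[OF a one] by simp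
  qed
  show "is_subfield (Pset x)" unfolding is_subfield_def
    using c[OF S(1)] one add Pset_mult neg inv by (intro conjI ballI) simp_all
  show "S \<union> {x} \<subseteq> Pset x" using c xin by blast
qed

end



lemma mpoly_eval_sup:
  assumes "finite A" "Poly_Mapping.keys f \<subseteq> A"
  shows "mpoly_eval f r = (\<Sum>mn\<in>A. Poly_Mapping.lookup f mn *
            (\<Prod>i\<in>Poly_Mapping.keys (mn :: nat \<Rightarrow>\<^sub>0 nat). r i ^ Poly_Mapping.lookup mn i))"
  unfolding mpoly_eval_def
  by (rule sum.mono_neutral_left[OF assms(1) assms(2)]) (simp add: in_keys_iff)

context sfld begin

lemma mpoly_of_poly:
  fixes p :: "'a poly" and r :: "nat \<Rightarrow> 'a" and n :: nat
  assumes cS: "\<forall>i. coeff p i \<in> S" and n2: "n \<ge> 2"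
  shows "\<exists>f :: (nat \<Rightarrow>\<^sub>0 nat) \<Rightarrow>\<^sub>0 'a.
           (\<forall>mn. Poly_Mapping.lookup f mn \<in> S) \<and>
           (\<forall>mn\<in>Poly_Mapping.keys f. Poly_Mapping.keys mn \<subseteq> {..<n - 1}) \<and>
           mpoly_eval f r = poly p (r 0)"
proof -
  define N where "N = degree p"
  define sg where "sg = (\<lambda>i::nat. Poly_Mapping.single (0::nat) i)"
  define f where "f = (\<Sum>i\<le>N. Poly_Mapping.single (sg i) (coeff p i))"
  have inj: "inj sg"
  proof (rule injI)
    fix i j assume "sg i = sg j"
    then have "Poly_Mapping.lookup (sg i) 0 = Poly_Mapping.lookup (sg j) 0" by simp
    then show "i = j" unfolding sg_def by simp
  qed
  have lk: "Poly_Mapping.lookup f mn = (\<Sum>i\<le>N. if sg i = mn then coeff p i else 0)" for mn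
    unfolding f_def by (simp add: lookup_sum lookup_single when_def)
  have lkS: "Poly_Mapping.lookup f mn \<in> S" for mn
    unfolding lk by (rule sf_sum[OF sf]) (use cS S(1) in auto)
  have lksg: "Poly_Mapping.lookup f (sg j) = coeff p j" if "j \<le> N" for j
  proof -
    have "Poly_Mapping.lookup f (sg j) = (\<Sum>i\<le>N. if i = j then coeff p i else 0)"
      unfolding lk using inj by (intro sum.cong) (auto dest: injD)
    also have "\<dots> = coeff p j" using that by simp
    finally show ?thesis .
  qed
  have keys: "Poly_Mapping.keys f \<subseteq> sg ` {..N}"
  proof -
    have "Poly_Mapping.keys f \<subseteq> (\<Union>i\<in>{..N}. Poly_Mapping.keys (Poly_Mapping.single (sg i) (coeff p i)))"
      unfolding f_def by (rule keys_sum)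
    also have "\<dots> \<subseteq> sg ` {..N}" by auto
    finally show ?thesis .
  qed
  have ksg: "Poly_Mapping.keys (sg i) \<subseteq> {0}" for i unfolding sg_def by simp
  have mon: "(\<Prod>k\<in>Poly_Mapping.keys (sg j). r k ^ Poly_Mapping.lookup (sg j) k) = r 0 ^ j" for j
    unfolding sg_def by (cases "j = 0") simp_all
  have "mpoly_eval f r = (\<Sum>mn\<in>sg ` {..N}. Poly_Mapping.lookup f mn *
            (\<Prod>k\<in>Poly_Mapping.keys mn. r k ^ Poly_Mapping.lookup mn k))"
    by (rule mpoly_eval_sup[OF _ keys]) simp
  also have "\<dots> = (\<Sum>j\<le>N. Poly_Mapping.lookup f (sg j) *
            (\<Prod>k\<in>Poly_Mapping.keys (sg j). r k ^ Poly_Mapping.lookup (sg j) k))"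
    by (rule sum.reindex[OF inj_on_subset[OF inj subset_UNIV], unfolded comp_def])
  also have "\<dots> = (\<Sum>j\<le>N. coeff p j * r 0 ^ j)"
    by (intro sum.cong) (simp_all add: lksg mon)
  also have "\<dots> = poly p (r 0)" unfolding N_def by (simp add: poly_altdef)
  finally have ev: "mpoly_eval f r = poly p (r 0)" .
  have kk: "\<forall>mn\<in>Poly_Mapping.keys f. Poly_Mapping.keys mn \<subseteq> {..<n - 1}"
  proof
    fix mn assume "mn \<in> Poly_Mapping.keys f"
    then obtain i where "mn = sg i" using keys by blast
    then show "Poly_Mapping.keys mn \<subseteq> {..<n - 1}" using ksg[of i] n2 by auto
  qed
  show ?thesis using lkS kk ev by blast
qed

end



theorem mainTheorem13:
  fixes S :: "'a::{field,finite} set" and r :: "nat \<Rightarrow> 'a" and n :: nat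
  assumes "is_subfield S"
    and "n \<ge> 2"
    and "gen_field S (r ` {..<n}) = UNIV"
    and "\<forall>i j. i \<le> j \<and> j < n \<longrightarrow>
           ext_degree S (gen_field S {r j}) \<le> ext_degree S (gen_field S {r i})"
    and "\<exists>i. Suc i < n \<and> ext_degree S (gen_field S {r (Suc i)}) < ext_degree S (gen_field S {r i})"
  shows "\<exists>f :: (nat \<Rightarrow>\<^sub>0 nat) \<Rightarrow>\<^sub>0 'a.
           (\<forall>mn. Poly_Mapping.lookup f mn \<in> S) \<and>
           (\<forall>mn\<in>Poly_Mapping.keys f. Poly_Mapping.keys mn \<subseteq> {..<n - 1}) \<and>
           ext_degree S (gen_field S {r (n - 1) + mpoly_eval f r})
             > ext_degree S (gen_field S {r (n - 1)})"
proof -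
  interpret sfld S by (rule sfld.intro[OF assms(1)])
  define dg where "dg = (\<lambda>x. ext_degree S (gen_field S {x}))"
  obtain i0 where i0: "Suc i0 < n" "dg (r (Suc i0)) < dg (r i0)"
    using assms(5) unfolding dg_def by blast
  have "dg (r (n - 1)) \<le> dg (r (Suc i0))" using assms(4) i0(1) unfolding dg_def by auto
  moreover have "dg (r i0) \<le> dg (r 0)" using assms(4) i0(1) unfolding dg_def by auto
  ultimately have lt: "dg (r (n - 1)) + 1 \<le> dg (r 0)" using i0(2) by simp
  let ?k = "dg (r (n - 1))"
  let ?q = "card S"
  define F where "F = gen_field S {r 0}"
  have F: "is_subfield F" "S \<subseteq> F" unfolding F_def using gen_field_sub gen_field_sup by blast+
  have cF: "card F = ?q ^ dg (r 0)" using card_subfield[OF F] unfolding dg_def F_def by simp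
  have "\<exists>t\<in>F. dg (r (n - 1) + t) > ?k"
  proof (rule ccontr)
    assume "\<not> ?thesis"
    then have sub: "(\<lambda>t. r (n - 1) + t) ` F \<subseteq> {x. ext_degree S (gen_field S {x}) \<le> ?k}"
      unfolding dg_def by auto
    have "card F = card ((\<lambda>t. r (n - 1) + t) ` F)" by (rule card_image[symmetric]) (simp add: inj_on_def)
    also have "\<dots> \<le> card {x. ext_degree S (gen_field S {x}) \<le> ?k}"
      using sub by (intro card_mono) auto
    also have "\<dots> < ?q ^ (?k + 1)" by (rule card_low_deg)
    also have "\<dots> \<le> ?q ^ dg (r 0)" using q2 lt by (intro power_increasing) auto
    finally show False using cF by simp
  qed
  then obtain t where t: "t \<in> F" "dg (r (n - 1) + t) > ?k" by blast
  have "F \<subseteq> Pset (r 0)" unfolding F_def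
    by (rule gen_field_least[OF Pset_subfield Pset_sup])
  then obtain p where p: "t = poly p (r 0)" "\<forall>i. coeff p i \<in> S" using t(1) unfolding Pset_def by blast
  obtain f :: "(nat \<Rightarrow>\<^sub>0 nat) \<Rightarrow>\<^sub>0 'a" where f: "\<forall>mn. Poly_Mapping.lookup f mn \<in> S"
      "\<forall>mn\<in>Poly_Mapping.keys f. Poly_Mapping.keys mn \<subseteq> {..<n - 1}" "mpoly_eval f r = poly p (r 0)"
    using mpoly_of_poly[OF p(2) assms(2), of r] by blast
  show ?thesis
    using f t p unfolding dg_def by (intro exI[of _ f]) simp
qed

end
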